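(* Let $\mu_0$ be the probability measure whose moments are $\binom{3n}{n}\frac{1}{n+1}$, $n\ge0$. Then, on a neighbourhood of $0$, its $S$-transform and $R$-transform are \[ S_{\mu_0}(z)=\frac{4(1+z)}{8z^2+12z+3+\sqrt{9+8z}},\qquad R_{\mu_0}(z)=\frac{4z-1+\sqrt{1-2z}}{2(1-2z)}, \] where the square roots are the principal branches, equal to $3$ and $1$ at $z=0$ respectively.
   Context: For a compactly supported probability measure $\mu$ on $[0,\infty)$, let $M_\mu(z)=\sum_{m\ge0}z^m\int t^m\,d\mu(t)$. The $R$-transform $R_\mu$ is defined near $0$ by $R_\mu(zM_\mu(z))+1=M_\mu(z)$. The $S$-transform $S_\mu$ is defined near $0$ by $M_\mu\!\left(\frac{z}{1+z}S_\mu(z)\right)=1+z$, equivalently $R_\mu(zS_\mu(z))=z$. *)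

theory Defs
  imports "HOL-Probability.Probability"
begin

definition moment_series :: "real measure \<Rightarrow> complex \<Rightarrow> complex" where
  "moment_series \<mu> z = (\<Sum>m. z ^ m * complex_of_real (\<integral>t. t ^ m \<partial>\<mu>))"

definition is_R_transform :: "real measure \<Rightarrow> (complex \<Rightarrow> complex) \<Rightarrow> bool" where
  "is_R_transform \<mu> R \<longleftrightarrow>
     (\<exists>r>0. R holomorphic_on ball 0 r) \<and>
     (\<forall>\<^sub>F z in nhds 0. R (z * moment_series \<mu> z) + 1 = moment_series \<mu> z)"

definition is_S_transform :: "real measure \<Rightarrow> (complex \<Rightarrow> complex) \<Rightarrow> bool" where
  "is_S_transform \<mu> S \<longleftrightarrow>
     (\<exists>r>0. S holomorphic_on ball 0 r) \<and>
     (\<forall>\<^sub>F z in nhds 0. moment_series \<mu> (z / (1 + z) * S z) = 1 + z)"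

end

theory Submission
  imports Defs
begin


lemma V_ex: "\<exists>V::complex fps. fps_nth V 0 = 0 \<and> V * (1 - V)^2 = fps_X"
proof -
  define g :: "complex fps" where "g = fps_X * (1 - fps_X)^2"
  have g0: "fps_nth g 0 = 0" unfolding g_def by simp
  have g1: "fps_nth g 1 = 1" unfolding g_def by (simp add: power2_eq_square fps_mult_nth numeral_2_eq_2)
  define V where "V = fps_inv g"
  have V0: "fps_nth V 0 = 0" unfolding V_def fps_inv_def by simp
  have "g oo V = fps_X" unfolding V_def using g0 g1 by (intro fps_inv_right) auto
  moreover have "g oo V = V * (1 - V)^2"
    unfolding g_def using V0
    by (simp add: fps_compose_mult_distrib fps_compose_power[symmetric] fps_compose_sub_distrib)
  ultimately show ?thesis using V0 by auto
qed

lemma ode: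
  fixes V :: "complex fps"
  assumes V0: "fps_nth V 0 = 0" and VX: "V * (1 - V)^2 = fps_X"
  defines "C \<equiv> fps_const (1/2) * (inverse (1-V) + inverse (1-V)^2)"
  defines "T1 \<equiv> fps_X * fps_deriv C"
  defines "T2 \<equiv> fps_X * fps_deriv T1"
  shows "2*(2*T2 + T1 - C) + 2 = 3*fps_X*(9*T2+9*T1+2*C)"
proof -
  define W where "W = 1 - V"
  define U where "U = 1 - 3*V"
  define P where "P = inverse W"
  define Q where "Q = inverse U"
  define h where "h = (fps_const (1/2) :: complex fps)"
  have h2: "h * 2 = 1" unfolding h_def by (simp add: numeral_fps_const flip: fps_const_mult)
  have WP: "W * P = 1" unfolding P_def W_def using V0 by (intro inverse_mult_eq_1') simp
  have UQ: "U * Q = 1" unfolding Q_def U_def using V0 by (intro inverse_mult_eq_1') simp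
  have X: "fps_X = V * W^2" using VX W_def by simp
  have dX: "fps_deriv V * W^2 + V * (2 * W * fps_deriv W) = 1"
    using arg_cong[OF X, of fps_deriv] by (simp add: fps_deriv_power power2_eq_square algebra_simps)
  have dW: "fps_deriv W = - fps_deriv V" unfolding W_def by simp
  have dU: "fps_deriv U = - 3 * fps_deriv V" unfolding U_def by simp
  have dP: "fps_deriv W * P + W * fps_deriv P = 0" using arg_cong[OF WP, of fps_deriv] by (simp add: algebra_simps)
  have dQ: "fps_deriv U * Q + U * fps_deriv Q = 0" using arg_cong[OF UQ, of fps_deriv] by (simp add: algebra_simps)
  have C: "C = h * (P + P^2)" unfolding C_def h_def P_def W_def ..
  have dC: "fps_deriv C = h * (fps_deriv P + 2 * P * fps_deriv P)"
    unfolding C h_def by (simp add: fps_deriv_power power2_eq_square algebra_simps)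
  have T1: "T1 = h * (V*P*Q + 2*V*P^2*Q)"
    unfolding T1_def dC using WP UQ X dX dW dU dP dQ h2 U_def W_def by algebra
  have dT1: "fps_deriv T1 = h * (fps_deriv V*P*Q + V*fps_deriv P*Q + V*P*fps_deriv Q
      + 2*(fps_deriv V*P^2*Q + V*(2*P*fps_deriv P)*Q + V*P^2*fps_deriv Q))"
    unfolding T1 h_def by (simp add: fps_deriv_power power2_eq_square algebra_simps)
  have dV: "fps_deriv V = P * Q" using WP UQ dX dW U_def W_def by algebra
  have dP': "fps_deriv P = P^3 * Q" using WP dP dW dV by algebra
  have dQ': "fps_deriv Q = 3 * P * Q^3" using UQ dQ dU dV by algebra
  have WP': "(1-V)*P = 1" using WP W_def by simp
  have UQ': "(1-3*V)*Q = 1" using UQ U_def by simp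
  have X': "fps_X = V * (1-V)^2" using X W_def by simp
  show ?thesis
    unfolding T2_def dT1 unfolding T1 C dP' dQ' dV X' using WP' UQ' h2 by algebra
qed

definition aa :: "nat \<Rightarrow> real" where "aa n = real ((3 * n) choose n) / real (n + 1)"
lemma binrec: "((3*n+3) choose (n+1)) * (2*(n+1)*(2*n+1)) = 3*(3*n+2)*(3*n+1)*((3*n) choose n)"
proof -
  have a: "((3*n+3) choose (n+1)) * (fact (n+1) * fact (2*n+2)) = (fact (3*n+3) :: nat)"
    using binomial_fact_lemma[of "n+1" "3*n+3"] by (simp add: algebra_simps)
  have b: "((3*n) choose n) * (fact n * fact (2*n)) = (fact (3*n) :: nat)"
    using binomial_fact_lemma[of "n" "3*n"] by (simp add: algebra_simps)
  have f1: "fact (3*n+3) = (3*n+3)*(3*n+2)*(3*n+1)*(fact (3*n)::nat)"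
    by (simp add: numeral_3_eq_3 algebra_simps)
  have f2: "fact (2*n+2) = (2*n+2)*(2*n+1)*(fact (2*n)::nat)"
    by (simp add: numeral_2_eq_2 algebra_simps)
  have f3: "fact (n+1) = (n+1)*(fact n::nat)" by simp
  have "(((3*n+3) choose (n+1)) * (2*(n+1)*(2*n+1))) * ((n+1) * (fact n * fact (2*n)))
       = (3*(3*n+2)*(3*n+1)*((3*n) choose n)) * ((n+1) * (fact n * fact (2*n)))"
  proof -
    have "(((3*n+3) choose (n+1)) * (2*(n+1)*(2*n+1))) * ((n+1) * (fact n * fact (2*n)))
       = ((3*n+3) choose (n+1)) * (fact (n+1) * fact (2*n+2))" unfolding f2 f3 by (simp add: algebra_simps)
    also have "\<dots> = (3*n+3)*(3*n+2)*(3*n+1)*(((3*n) choose n) * (fact n * fact (2*n)))" unfolding a f1 b by simp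
    finally show ?thesis by (simp add: algebra_simps)
  qed
  moreover have "(n+1) * (fact n * fact (2*n)) \<noteq> (0::nat)" by simp
  ultimately show ?thesis by (metis mult_right_cancel)
qed
lemma aa_rec: "2 * (2 * real n + 1) * (real n + 2) * aa (Suc n) = 3 * (3 * real n + 1) * (3 * real n + 2) * aa n"
proof -
  have r: "real ((3*n+3) choose (n+1)) * (2*(real n+1)*(2*real n+1)) = 3*(3*real n+2)*(3*real n+1)*real ((3*n) choose n)"
  proof -
    have "real (((3*n+3) choose (n+1)) * (2*(n+1)*(2*n+1))) = real (3*(3*n+2)*(3*n+1)*((3*n) choose n))"
      using binrec by metis
    then show ?thesis by (simp only: of_nat_mult of_nat_add of_nat_numeral of_nat_1)
  qed
  define B1 where "B1 = real ((3*n+3) choose (n+1))"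
  define B0 where "B0 = real ((3*n) choose n)"
  have a1: "aa (Suc n) = B1 / (real n + 2)" unfolding aa_def B1_def
    by (simp add: algebra_simps)
  have a0: "aa n = B0 / (real n + 1)" unfolding aa_def B0_def by simp
  have r': "B1 * (2*(real n+1)*(2*real n+1)) = 3*(3*real n+2)*(3*real n+1)*B0" using r unfolding B1_def B0_def .
  have p: "real n + 2 \<noteq> 0" "real n + 1 \<noteq> 0" by linarith+
  show ?thesis unfolding a1 a0 using p
    by (simp add: field_simps) (use r' in algebra)
qed

lemma thX: "fps_nth (fps_X * fps_deriv F) k = of_nat k * fps_nth (F :: complex fps) k"
  by (cases k) auto
lemma coeffs:
  fixes C :: "complex fps"
  assumes C0: "fps_nth C 0 = 1"
  and ode: "2*(2*(fps_X * fps_deriv (fps_X * fps_deriv C)) + fps_X * fps_deriv C - C) + 2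
       = 3*fps_X*(9*(fps_X * fps_deriv (fps_X * fps_deriv C))+9*(fps_X * fps_deriv C)+2*C)"
  shows "fps_nth C n = of_real (aa n)"
proof -
  define T1 where "T1 = fps_X * fps_deriv C"
  define T2 where "T2 = fps_X * fps_deriv T1"
  have t1: "fps_nth T1 k = of_nat k * fps_nth C k" for k unfolding T1_def by (rule thX)
  have t2: "fps_nth T2 k = of_nat k * (of_nat k * fps_nth C k)" for k unfolding T2_def thX t1 ..
  have ode': "2*(2*T2 + T1 - C) + 2 = 3*(fps_X*(9*T2+9*T1+2*C))" using ode unfolding T1_def T2_def by (simp add: mult.assoc)
  show ?thesis
  proof (induction n)
  case 0 then show ?case using C0 by (simp add: aa_def)
next
  case (Suc n)
  have "fps_nth (2*(2*T2 + T1 - C) + 2) (Suc n) = fps_nth (3*(fps_X*(9*T2+9*T1+2*C))) (Suc n)"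
    using ode' by simp
  hence e: "2*(2*(of_nat (Suc n))^2 * fps_nth C (Suc n) + of_nat (Suc n) * fps_nth C (Suc n) - fps_nth C (Suc n))
      = 3 * (9 * (of_nat n)^2 * fps_nth C n + 9 * of_nat n * fps_nth C n + 2 * fps_nth C n)"
    by (simp add: numeral_fps_const t1 t2 power2_eq_square del: of_nat_Suc)
  have e2: "complex_of_real (2 * (2 * real n + 1) * (real n + 2)) * fps_nth C (Suc n)
       = complex_of_real (3 * (3 * real n + 1) * (3 * real n + 2)) * complex_of_real (aa n)"
    using e Suc.IH by (simp add: algebra_simps power2_eq_square)
  have nz: "complex_of_real (2 * (2 * real n + 1) * (real n + 2)) \<noteq> 0"
    by (simp only: of_real_eq_0_iff) (auto simp: add_nonneg_pos)
  have "fps_nth C (Suc n) = complex_of_real (3 * (3 * real n + 1) * (3 * real n + 2)) * complex_of_real (aa n)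
      / complex_of_real (2 * (2 * real n + 1) * (real n + 2))" using e2 nz by (simp add: field_simps)
  also have "\<dots> = complex_of_real (aa (Suc n))"
  proof -
    have nz': "2 * (2 * real n + 1) * (real n + 2) \<noteq> 0" by (auto simp: add_nonneg_pos)
    have r: "3 * (3 * real n + 1) * (3 * real n + 2) * aa n / (2 * (2 * real n + 1) * (real n + 2)) = aa (Suc n)"
      using aa_rec[of n] nz' by (simp add: field_simps)
    show ?thesis by (simp only: of_real_mult[symmetric] of_real_divide[symmetric] r)
  qed
  finally show ?case .
  qed
qed

definition AA :: "complex fps" where "AA = Abs_fps (\<lambda>n. complex_of_real (aa n))"

lemma AA_cubic: "2*AA*(1-2*fps_X*AA)^2 - 2 + 4*fps_X*AA + fps_X = 0"
proof -
  obtain V :: "complex fps" where V0: "fps_nth V 0 = 0" and VX: "V * (1 - V)^2 = fps_X" using V_ex by blast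
  define C where "C = fps_const (1/2) * (inverse (1-V) + inverse (1-V)^2)"
  have C0: "fps_nth C 0 = 1" unfolding C_def using V0 by (simp add: power2_eq_square)
  have "fps_nth C n = of_real (aa n)" for n
    by (rule coeffs[OF C0]) (use ode[OF V0 VX] in \<open>simp add: C_def\<close>)
  hence CA: "C = AA" unfolding AA_def by (intro fps_ext) simp
  define P where "P = inverse (1 - V)"
  define h where "h = (fps_const (1/2) :: complex fps)"
  have h2: "h * 2 = 1" unfolding h_def by (simp add: numeral_fps_const flip: fps_const_mult)
  have WP: "(1-V) * P = 1" unfolding P_def using V0 by (intro inverse_mult_eq_1') simp
  have C': "C = h * (P + P^2)" unfolding C_def h_def P_def ..
  show ?thesis unfolding CA[symmetric] C' VX[symmetric] using WP h2 by algebra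
qed

lemma aa_bound: "aa n \<le> 8 ^ n"
proof -
  have "real ((3*n) choose n) \<le> 2 ^ (3*n)"
    using binomial_le_pow2[of "3*n" n] by (metis of_nat_le_iff of_nat_numeral of_nat_power)
  also have "(2::real) ^ (3*n) = 8 ^ n" by (simp add: power_mult)
  finally have b: "real ((3*n) choose n) \<le> 8 ^ n" .
  have "aa n \<le> real ((3*n) choose n)" unfolding aa_def by (simp add: divide_le_eq)
  with b show ?thesis by linarith
qed

lemma aa_nonneg: "aa n \<ge> 0" unfolding aa_def by simp

lemma AA_rad: "fps_conv_radius AA > 0"
proof -
  have "summable (\<lambda>n. fps_nth AA n * (1/16 :: complex) ^ n)"
  proof (rule summable_comparison_test)
    show "\<exists>N. \<forall>n\<ge>N. norm (fps_nth AA n * (1/16 :: complex) ^ n) \<le> (1/2) ^ n"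
    proof (intro exI allI impI)
      fix n :: nat
      have "norm (fps_nth AA n * (1/16 :: complex) ^ n) = aa n / 16 ^ n"
        unfolding AA_def using aa_nonneg[of n] by (simp add: norm_mult norm_power power_one_over norm_divide)
      also have "\<dots> \<le> 8 ^ n / 16 ^ n" by (intro divide_right_mono aa_bound) simp
      also have "\<dots> = (1/2) ^ n" by (simp add: power_divide[symmetric])
      finally show "norm (fps_nth AA n * (1/16 :: complex) ^ n) \<le> (1/2) ^ n" .
    qed
    show "summable (\<lambda>n. (1/2::real) ^ n)" by (rule summable_geometric) simp
  qed
  hence "conv_radius (fps_nth AA) \<ge> norm (1/16 :: complex)" by (rule conv_radius_geI)
  hence "fps_conv_radius AA \<ge> ereal (1/16)" unfolding fps_conv_radius_def by simp
  thus ?thesis by (rule order.strict_trans2[rotated]) simp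
qed

definition Fc :: "complex \<Rightarrow> complex \<Rightarrow> complex" where
  "Fc w x = 2*x*(1-2*w*x)^2 - 2 + 4*w*x + w"

lemma root_x:
  assumes "(w \<longlongrightarrow> 0) F" "(x \<longlongrightarrow> 1) F" "(y \<longlongrightarrow> 1) F"
    "eventually (\<lambda>z. Fc (w z) (x z) = 0) F" "eventually (\<lambda>z. Fc (w z) (y z) = 0) F"
  shows "eventually (\<lambda>z. x z = y z) F"
proof -
  define G where "G z = 2 - 8*w z*(x z+y z) + 8*(w z)^2*((x z)^2 + x z*y z + (y z)^2) + 4*w z" for z
  have "(G \<longlongrightarrow> 2 - 8*0*(1+1) + 8*0^2*(1^2+1*1+1^2) + 4*0) F"
    unfolding G_def by (intro tendsto_intros assms)
  hence "(G \<longlongrightarrow> 2) F" by simp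
  hence "eventually (\<lambda>z. G z \<noteq> 0) F" by (rule tendsto_imp_eventually_ne) simp
  with assms(4,5) show ?thesis
  proof eventually_elim
    case (elim z)
    have "Fc (w z) (x z) - Fc (w z) (y z) = (x z - y z) * G z" unfolding Fc_def G_def by algebra
    with elim show ?case by simp
  qed
qed

lemma root_w:
  assumes "(w1 \<longlongrightarrow> 0) F" "(w2 \<longlongrightarrow> 0) F" "(x \<longlongrightarrow> 1) F"
    "eventually (\<lambda>z. Fc (w1 z) (x z) = 0) F" "eventually (\<lambda>z. Fc (w2 z) (x z) = 0) F"
  shows "eventually (\<lambda>z. w1 z = w2 z) F"
proof -
  define G where "G z = 8*(x z)^3*(w1 z + w2 z) - 8*(x z)^2 + 4*x z + 1" for z
  have "(G \<longlongrightarrow> 8*1^3*(0+0) - 8*1^2 + 4*1 + 1) F"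
    unfolding G_def by (intro tendsto_intros assms)
  hence "(G \<longlongrightarrow> -3) F" by simp
  hence "eventually (\<lambda>z. G z \<noteq> 0) F" by (rule tendsto_imp_eventually_ne) simp
  with assms(4,5) show ?thesis
  proof eventually_elim
    case (elim z)
    have "Fc (w1 z) (x z) - Fc (w2 z) (x z) = (w1 z - w2 z) * G z" unfolding Fc_def G_def by algebra
    with elim show ?case by simp
  qed
qed

lemma Re_poly_pos:
  fixes z :: complex assumes "norm z < 1/10"
  shows "Re (8 * z\<^sup>2 + 12 * z + 3) > 0"
proof -
  have "norm (8 * z\<^sup>2 + 12 * z) \<le> norm (8 * z\<^sup>2) + norm (12 * z)" by (rule norm_triangle_ineq)
  also have "\<dots> = 8 * norm z ^ 2 + 12 * norm z" by (simp add: norm_mult norm_power)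
  also have "\<dots> \<le> 8 * (1/10)^2 + 12 * (1/10)"
    using assms by (intro add_mono mult_left_mono power_mono) auto
  finally have n0: "norm (8 * z\<^sup>2 + 12 * z) \<le> 8 * (1/10)^2 + 12 * (1/10)" .
  have "8 * (1/10::real)^2 + 12 * (1/10) < 3" by (simp add: power2_eq_square)
  with n0 have n: "norm (8 * z\<^sup>2 + 12 * z) < 3" by linarith
  have "- Re (8 * z\<^sup>2 + 12 * z) \<le> norm (8 * z\<^sup>2 + 12 * z)"
    using abs_Re_le_cmod[of "8 * z\<^sup>2 + 12 * z"] by linarith
  with n show ?thesis by simp
qed

lemma Sf_den_nz:
  fixes z :: complex assumes "norm z < 1/10"
  shows "8 * z\<^sup>2 + 12 * z + 3 + csqrt (9 + 8 * z) \<noteq> 0"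
proof -
  have e: "Re (8 * z\<^sup>2 + 12 * z + 3 + csqrt (9 + 8 * z)) = Re (8 * z\<^sup>2 + 12 * z + 3) + Re (csqrt (9 + 8 * z))"
    by (simp only: plus_complex.sel)
  have "Re (8 * z\<^sup>2 + 12 * z + 3 + csqrt (9 + 8 * z)) > 0"
    unfolding e using Re_poly_pos[OF assms] Re_csqrt[of "9 + 8*z"] by linarith
  moreover have "\<And>x::complex. Re x > 0 \<Longrightarrow> x \<noteq> 0" by auto
  ultimately show ?thesis by blast
qed

lemma Re_pos_nz: "Re (x::complex) > 0 \<Longrightarrow> x \<noteq> 0" by auto

lemma Re_9_pos: fixes z :: complex assumes "norm z < 1/10" shows "Re (9 + 8 * z) > 0"
  using abs_Re_le_cmod[of z] assms by simp

lemma Re_1_pos: fixes z :: complex assumes "norm z < 1/4" shows "Re (1 - 2 * z) > 0"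
  using abs_Re_le_cmod[of z] assms by simp

lemma Sf_identity:
  fixes z :: complex assumes "norm z < 1/10"
  shows "Fc (z / (1 + z) * (4 * (1 + z) / (8 * z\<^sup>2 + 12 * z + 3 + csqrt (9 + 8 * z)))) (1 + z) = 0"
proof -
  define q where "q = csqrt (9 + 8 * z)"
  have q2: "q^2 = 9 + 8*z" unfolding q_def by simp
  have D: "8 * z\<^sup>2 + 12 * z + 3 + q \<noteq> 0" unfolding q_def using Sf_den_nz[OF assms] .
  have z1: "1 + z \<noteq> 0"
  proof
    assume "1 + z = 0" hence "z = -1" by (simp add: add_eq_0_iff)
    with assms show False by simp
  qed
  define d where "d = 8 * z\<^sup>2 + 12 * z + 3 + q"
  have d0: "d \<noteq> 0" using D d_def by simp
  have e: "z / (1 + z) * (4 * (1 + z) / d) = 4 * z / d"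
    using z1 d0 by (metis (no_types, lifting) mult.commute nonzero_mult_div_cancel_left times_divide_eq_left times_divide_eq_right)
  have "Fc (4 * z / d) (1 + z) = 0"
    unfolding Fc_def using d0 by (simp add: field_simps) (use q2 d_def in algebra)
  thus ?thesis using e unfolding q_def d_def by simp
qed


theorem mainTheorem7:
  fixes \<mu> :: "real measure"
  assumes "prob_space \<mu>"
    and "sets \<mu> = sets borel"
    and "\<exists>K. AE t in \<mu>. 0 \<le> t \<and> t \<le> K"
    and "\<And>n::nat. (\<integral>t. t ^ n \<partial>\<mu>) = real ((3 * n) choose n) / real (n + 1)"
  defines "Sf \<equiv> (\<lambda>z::complex. 4 * (1 + z) / (8 * z\<^sup>2 + 12 * z + 3 + csqrt (9 + 8 * z)))"
    and "Rf \<equiv> (\<lambda>z::complex. (4 * z - 1 + csqrt (1 - 2 * z)) / (2 * (1 - 2 * z)))"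
  shows "is_S_transform \<mu> Sf \<and> is_R_transform \<mu> Rf
     \<and> (\<forall>S. is_S_transform \<mu> S \<longrightarrow> (\<forall>\<^sub>F z in nhds 0. S z = Sf z))
     \<and> (\<forall>R. is_R_transform \<mu> R \<longrightarrow> (\<forall>\<^sub>F z in nhds 0. R z = Rf z))"
proof -
  let ?M = "moment_series \<mu>"
  have Meq: "?M = eval_fps AA"
    by (rule ext) (simp add: moment_series_def eval_fps_def AA_def assms(4) aa_def mult.commute)
  have rad: "fps_conv_radius AA > 0" by (rule AA_rad)
  have Mc: "isCont ?M 0" unfolding Meq using rad by (intro continuous_eval_fps) (simp add: zero_ereal_def)
  have M0: "?M 0 = 1" unfolding Meq by (simp add: eval_fps_at_0 AA_def aa_def)
  have cub: "eventually (\<lambda>z. Fc z (?M z) = 0) (nhds 0)"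
  proof -
    have "(\<lambda>z. Fc z (eval_fps AA z)) has_fps_expansion (2*AA*(1-2*fps_X*AA)^2 - 2 + 4*fps_X*AA + fps_X)"
      unfolding Fc_def power2_eq_square
      by (intro fps_expansion_intros eval_fps_has_fps_expansion rad)
    hence "(\<lambda>z. Fc z (eval_fps AA z)) has_fps_expansion 0" unfolding AA_cubic .
    thus ?thesis unfolding Meq has_fps_expansion_def by (auto elim: eventually_mono)
  qed
  have cubF: "eventually (\<lambda>z. Fc (w z) (?M (w z)) = 0) F" if "(w \<longlongrightarrow> 0) F" for w :: "complex \<Rightarrow> complex" and F
    using eventually_compose_filterlim[OF cub that] .
  have Mlim: "((\<lambda>z. ?M (w z)) \<longlongrightarrow> 1) F" if "(w \<longlongrightarrow> 0) F" for w :: "complex \<Rightarrow> complex" and F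
    using isCont_tendsto_compose[OF Mc that] M0 by simp
  have nh: "(f \<longlongrightarrow> f 0) (nhds 0)" if "isCont f 0" for f :: "complex \<Rightarrow> complex"
    using that tendsto_at_iff_tendsto_nhds[of f 0] by (simp add: isCont_def)
  have ball_ev: "eventually (\<lambda>z::complex. norm z < r) (nhds 0)" if "r > 0" for r :: real
  proof -
    have "eventually (\<lambda>z::complex. z \<in> ball 0 r) (nhds 0)" by (rule eventually_nhds_in_open) (use that in auto)
    thus ?thesis by (rule eventually_mono) simp
  qed
  have b10: "eventually (\<lambda>z::complex. norm z < 1/10) (nhds 0)" by (rule ball_ev) simp
  have b2: "eventually (\<lambda>z::complex. norm z < 1/2) (nhds 0)" by (rule ball_ev) simp
  have b4: "eventually (\<lambda>z::complex. norm z < 1/4) (nhds 0)" by (rule ball_ev) simp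
  have idlim: "((\<lambda>z::complex. z) \<longlongrightarrow> 0) (nhds 0)" by (rule filterlim_ident)
  have onelim: "((\<lambda>z::complex. 1 + z) \<longlongrightarrow> 1) (nhds 0)"
    using tendsto_add[OF tendsto_const[of 1] idlim] by simp

  have hSf: "Sf holomorphic_on ball 0 (1/10)"
    unfolding Sf_def
  proof (intro holomorphic_intros)
    fix z :: complex assume "z \<in> ball 0 (1/10)"
    hence z: "norm z < 1/10" by simp
    show "9 + 8 * z \<notin> \<real>\<^sub>\<le>\<^sub>0" using Re_9_pos[OF z] by (auto simp: complex_nonpos_Reals_iff)
    show "8 * z\<^sup>2 + 12 * z + 3 + csqrt (9 + 8 * z) \<noteq> 0" by (rule Sf_den_nz[OF z])
  qed
  have cSf: "isCont Sf 0"
    using holomorphic_on_imp_continuous_on[OF hSf] by (rule continuous_on_interior) simp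
  define wf where "wf z = z / (1 + z) * Sf z" for z
  have cw: "isCont wf 0" unfolding wf_def by (intro continuous_intros cSf) simp
  have wlim: "(wf \<longlongrightarrow> 0) (nhds 0)" using nh[OF cw] by (simp add: wf_def)
  have Fwf: "eventually (\<lambda>z. Fc (wf z) (1 + z) = 0) (nhds 0)"
    using b10
  proof (rule eventually_mono)
    fix z :: complex assume "norm z < 1/10"
    thus "Fc (wf z) (1 + z) = 0" unfolding wf_def Sf_def by (rule Sf_identity)
  qed
  have Sev: "eventually (\<lambda>z. ?M (wf z) = 1 + z) (nhds 0)"
    by (rule root_x[OF wlim Mlim[OF wlim] onelim cubF[OF wlim] Fwf])
  have S1: "is_S_transform \<mu> Sf"
    unfolding is_S_transform_def using hSf Sev unfolding wf_def
    by (intro conjI exI[of _ "1/10"]) auto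

  have hRf: "Rf holomorphic_on ball 0 (1/4)"
    unfolding Rf_def
  proof (intro holomorphic_intros)
    fix z :: complex assume "z \<in> ball 0 (1/4)"
    hence z: "norm z < 1/4" by simp
    show "1 - 2 * z \<notin> \<real>\<^sub>\<le>\<^sub>0" using Re_1_pos[OF z] by (auto simp: complex_nonpos_Reals_iff)
    show "2 * (1 - 2 * z) \<noteq> 0" using Re_pos_nz[OF Re_1_pos[OF z]] by simp
  qed
  have Rev: "eventually (\<lambda>z. Rf (z * ?M z) + 1 = ?M z) (nhds 0)"
  proof -
    define sr where "sr z = 2 * ?M z * (1 - 2 * z * ?M z) - 1" for z
    have Ml: "(?M \<longlongrightarrow> 1) (nhds 0)" using Mlim[OF idlim] by simp
    have "(sr \<longlongrightarrow> 2 * 1 * (1 - 2 * 0 * 1) - 1) (nhds 0)"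
      unfolding sr_def by (intro tendsto_intros Ml idlim)
    hence "((\<lambda>z. Re (sr z)) \<longlongrightarrow> 1) (nhds 0)" using tendsto_Re by fastforce
    hence ev1: "eventually (\<lambda>z. Re (sr z) > 0) (nhds 0)" by (rule order_tendstoD(1)) simp
    have "((\<lambda>z. 1 - 2 * z * ?M z) \<longlongrightarrow> 1 - 2 * 0 * 1) (nhds 0)"
      by (intro tendsto_intros Ml idlim)
    hence ev2: "eventually (\<lambda>z. 1 - 2 * z * ?M z \<noteq> 0) (nhds 0)"
      by (intro tendsto_imp_eventually_ne) auto
    from cub ev1 ev2 show ?thesis
    proof eventually_elim
      case (elim z)
      define m where "m = ?M z"
      have F0: "Fc z m = 0" and Rp: "Re (sr z) > 0" and nz: "1 - 2 * z * m \<noteq> 0"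
        using elim unfolding m_def by auto
      have srm: "sr z = 2 * m * (1 - 2 * z * m) - 1" unfolding sr_def m_def ..
      have "(sr z)^2 = 1 - 2 * (z * m)"
        unfolding srm using F0 unfolding Fc_def by algebra
      hence cs: "csqrt (1 - 2 * (z * m)) = sr z" using Rp by (intro csqrt_unique) auto
      have nz': "2 * (1 - 2 * (z * m)) \<noteq> 0" using nz by (simp add: mult.assoc mult.commute)
      have "Rf (z * m) + 1 = m"
        unfolding Rf_def cs srm using nz' by (simp add: field_simps)
      thus ?case unfolding m_def .
    qed
  qed
  have R1: "is_R_transform \<mu> Rf"
    unfolding is_R_transform_def using hRf Rev
    by (intro conjI exI[of _ "1/4"]) auto

  have S2: "\<forall>\<^sub>F z in nhds 0. S z = Sf z" if iS: "is_S_transform \<mu> S" for S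
  proof -
    from iS obtain r where r: "r > 0" "S holomorphic_on ball 0 r" and ev: "eventually (\<lambda>z. ?M (z / (1 + z) * S z) = 1 + z) (nhds 0)"
      unfolding is_S_transform_def by auto
    have cS: "isCont S 0"
      using holomorphic_on_imp_continuous_on[OF r(2)] by (rule continuous_on_interior) (use r in simp)
    define w1 where "w1 z = z / (1 + z) * S z" for z
    have cw1: "isCont w1 0" unfolding w1_def by (intro continuous_intros cS) simp
    have w1lim: "(w1 \<longlongrightarrow> 0) (nhds 0)" using nh[OF cw1] by (simp add: w1_def)
    have Fw1: "eventually (\<lambda>z. Fc (w1 z) (1 + z) = 0) (nhds 0)"
      using cubF[OF w1lim] ev unfolding w1_def by eventually_elim simp
    have "eventually (\<lambda>z. w1 z = wf z) (nhds 0)"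
      by (rule root_w[OF w1lim wlim onelim Fw1 Fwf])
    hence "eventually (\<lambda>z. z \<noteq> 0 \<longrightarrow> S z = Sf z) (nhds 0)"
      using b2
    proof eventually_elim
      case (elim z)
      show ?case
      proof
        assume z0: "z \<noteq> 0"
        have z1: "1 + z \<noteq> 0"
        proof
          assume "1 + z = 0" hence "z = -1" by (simp add: add_eq_0_iff)
          with elim show False by simp
        qed
        from elim(1) have "z / (1 + z) * S z = z / (1 + z) * Sf z" unfolding w1_def wf_def .
        with z0 z1 show "S z = Sf z" by simp
      qed
    qed
    hence eva: "eventually (\<lambda>z. S z = Sf z) (at 0)"
      using eventually_neq_at_within[of 0 0 UNIV] unfolding eventually_nhds_conv_at
      by (auto elim: eventually_mp)
    have l1: "S \<midarrow>0\<rightarrow> S 0" using cS by (simp add: isCont_def)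
    have "Sf \<midarrow>0\<rightarrow> Sf 0" using cSf by (simp add: isCont_def)
    hence l2: "S \<midarrow>0\<rightarrow> Sf 0" by (subst tendsto_cong[OF eva])
    have "S 0 = Sf 0" using LIM_unique[OF l1 l2] .
    thus ?thesis using eva unfolding eventually_nhds_conv_at by auto
  qed

  have R2: "\<forall>\<^sub>F z in nhds 0. R z = Rf z" if iR: "is_R_transform \<mu> R" for R
  proof -
    from iR have ev: "eventually (\<lambda>z. R (z * ?M z) + 1 = ?M z) (nhds 0)"
      unfolding is_R_transform_def by auto
    define s where "s u = csqrt (1 - 2 * u)" for u :: complex
    define m where "m u = (1 + s u) / (2 * (1 - 2 * u))" for u
    define zz where "zz u = u / m u" for u
    have cs: "isCont s 0" unfolding s_def
      by (intro isCont_csqrt' continuous_intros) (auto simp: complex_nonpos_Reals_iff)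
    have slim: "(s \<longlongrightarrow> 1) (nhds 0)" using nh[OF cs] by (simp add: s_def)
    have "(m \<longlongrightarrow> (1 + 1) / (2 * (1 - 2 * 0))) (nhds 0)"
      unfolding m_def by (intro tendsto_intros slim idlim) simp
    hence mlim: "(m \<longlongrightarrow> 1) (nhds 0)" by simp
    have "(zz \<longlongrightarrow> 0 / 1) (nhds 0)" unfolding zz_def by (intro tendsto_intros mlim idlim) simp
    hence zzlim: "(zz \<longlongrightarrow> 0) (nhds 0)" by simp
    have evm: "eventually (\<lambda>u. m u \<noteq> 0) (nhds 0)" by (rule tendsto_imp_eventually_ne[OF mlim]) simp
    have Fzm: "eventually (\<lambda>u. Fc (zz u) (m u) = 0) (nhds 0)"
      using evm b4
    proof eventually_elim
      case (elim u)
      have u1: "1 - 2 * u \<noteq> 0" using Re_pos_nz[OF Re_1_pos[of u]] elim by blast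
      have s2: "(s u)^2 = 1 - 2 * u" unfolding s_def by simp
      have s1: "1 + s u \<noteq> 0" using elim(1) unfolding m_def by auto
      have mm: "m u * (2 * (1 - 2 * u)) = 1 + s u" unfolding m_def using u1 by simp
      have zm: "zz u * m u = u" unfolding zz_def using elim(1) by simp
      have mi: "m u * inverse (m u) = 1" using elim(1) by simp
      show ?case unfolding Fc_def using mm zm mi s2 by algebra
    qed
    have eqm: "eventually (\<lambda>u. ?M (zz u) = m u) (nhds 0)"
      by (rule root_x[OF zzlim Mlim[OF zzlim] mlim cubF[OF zzlim] Fzm])
    have evz: "eventually (\<lambda>u. R (zz u * ?M (zz u)) + 1 = ?M (zz u)) (nhds 0)"
      using eventually_compose_filterlim[OF ev zzlim] .
    from evz eqm evm b4 show ?thesis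
    proof eventually_elim
      case (elim u)
      have u1: "1 - 2 * u \<noteq> 0" using Re_pos_nz[OF Re_1_pos[of u]] elim by blast
      have zm: "zz u * m u = u" unfolding zz_def using elim by simp
      have "R u + 1 = m u" using elim(1) unfolding elim(2) zm .
      hence "R u = m u - 1" by (simp add: algebra_simps)
      also have "\<dots> = Rf u" unfolding m_def Rf_def s_def using u1
        by (simp add: field_simps)
      finally show ?case .
    qed
  qed
  show ?thesis using S1 R1 S2 R2 by blast
qed

end
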